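(* Let $\mu,\nu$ be constants and consider the equation $m_t+f(u,u_x)m+(g(u,u_x)m)_x=0$, $m=u-u_{xx}$, where $(f,g)$ belongs to one of the three families: (a) $\nu=0$, $\mu=2$, $f=-\tfrac12u_xh'(u)$, $g=h(u)$ with $h$ an arbitrary smooth function; (b) $\nu\neq0$, $\mu=2$, $f=\alpha u_x$, $g=-2\alpha u+\beta$ with $\alpha,\beta$ constants; (c) $\mu\neq2$, $\nu=(\mu-2)\beta$, $f=\alpha u_x/(u+\beta)^3$, $g=\alpha/(u+\beta)^2$ with $\alpha,\beta$ constants. Then for every locally smooth solution $u(t,x)$ the local conservation law $D_tT+D_x\Phi=0$ holds with $$T=u_{xx}^2+\mu u_x^2+(\mu-1)u^2+2\nu u,$$ $$\Phi=2((1-\mu)u-\nu)u_{tx}-2u_xu_t+\big(2((\mu-2)u+\nu)+m\big)mg+\big((2-\mu)(u^2-u_x^2)-\nu u\big)g+\tfrac12((\mu-2)u+\nu)u_x^2g_u+\nu G,$$ where $G=\int g\,du$. Consequently, on a spatial domain $\Omega\subseteq\mathbb R$, the gradient energy $E[u]=\int_\Omega u_{xx}^2+\mu u_x^2+(\mu-1)u^2+2\nu u\,dx$ satisfies $\frac{d}{dt}E=0$ for all solutions whose flux $\Phi$ vanishes at $\partial\Omega$.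
   Context: $D_t$, $D_x$ denote total derivatives; the conservation law holds on solutions, i.e. after eliminating $m_t$ via $m_t=-f(u,u_x)m-(g(u,u_x)m)_x$. In each family $g$ depends only on $u$, $g_u$ is its derivative, and $G$ is an antiderivative of $g$ with respect to $u$. In family (c) the expressions are considered where $u+\beta\neq0$. *)

theory Defs
  imports "HOL-Analysis.Analysis"
begin

definition pdx :: "(real \<Rightarrow> real \<Rightarrow> real) \<Rightarrow> real \<Rightarrow> real \<Rightarrow> real" where
  "pdx F t x = deriv (\<lambda>y. F t y) x"

definition pdt :: "(real \<Rightarrow> real \<Rightarrow> real) \<Rightarrow> real \<Rightarrow> real \<Rightarrow> real" where
  "pdt F t x = deriv (\<lambda>s. F s x) t"

fun pds :: "bool list \<Rightarrow> (real \<Rightarrow> real \<Rightarrow> real) \<Rightarrow> real \<Rightarrow> real \<Rightarrow> real" where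
  "pds [] F = F"
| "pds (b # bs) F = (if b then pdt else pdx) (pds bs F)"

definition smooth2 :: "(real \<times> real) set \<Rightarrow> (real \<Rightarrow> real \<Rightarrow> real) \<Rightarrow> bool" where
  "smooth2 U F \<longleftrightarrow> open U \<and> (\<forall>ds. (\<lambda>z. pds ds F (fst z) (snd z)) differentiable_on U)"

definition smooth1 :: "(real \<Rightarrow> real) \<Rightarrow> bool" where
  "smooth1 h \<longleftrightarrow> (\<forall>n. ((deriv ^^ n) h) differentiable_on UNIV)"

definition mfun :: "(real \<Rightarrow> real \<Rightarrow> real) \<Rightarrow> real \<Rightarrow> real \<Rightarrow> real" where
  "mfun u t x = u t x - pdx (pdx u) t x"

definition solves_at ::
  "(real \<Rightarrow> real \<Rightarrow> real) \<Rightarrow> (real \<Rightarrow> real) \<Rightarrow> (real \<Rightarrow> real \<Rightarrow> real) \<Rightarrow> real \<Rightarrow> real \<Rightarrow> bool" where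
  "solves_at f g u t x \<longleftrightarrow>
     pdt (mfun u) t x + f (u t x) (pdx u t x) * mfun u t x
     + pdx (\<lambda>s y. g (u s y) * mfun u s y) t x = 0"

definition Tdens :: "real \<Rightarrow> real \<Rightarrow> (real \<Rightarrow> real \<Rightarrow> real) \<Rightarrow> real \<Rightarrow> real \<Rightarrow> real" where
  "Tdens \<mu> \<nu> u t x = (pdx (pdx u) t x)\<^sup>2 + \<mu> * (pdx u t x)\<^sup>2 + (\<mu> - 1) * (u t x)\<^sup>2 + 2 * \<nu> * u t x"

text \<open>Flux Phi (u_tx = d/dx d/dt u; g_u = deriv g; G an antiderivative of g).\<close>
definition Phi ::
  "real \<Rightarrow> real \<Rightarrow> (real \<Rightarrow> real) \<Rightarrow> (real \<Rightarrow> real) \<Rightarrow> (real \<Rightarrow> real \<Rightarrow> real) \<Rightarrow> real \<Rightarrow> real \<Rightarrow> real" where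
  "Phi \<mu> \<nu> g G u t x =
     (let v = u t x; vx = pdx u t x; vt = pdt u t x; vtx = pdx (pdt u) t x; m = mfun u t x in
      2 * ((1 - \<mu>) * v - \<nu>) * vtx - 2 * vx * vt
      + (2 * ((\<mu> - 2) * v + \<nu>) + m) * m * g v
      + ((2 - \<mu>) * (v\<^sup>2 - vx\<^sup>2) - \<nu> * v) * g v
      + 1/2 * ((\<mu> - 2) * v + \<nu>) * vx\<^sup>2 * deriv g v
      + \<nu> * G v)"

end

theory Submission
  imports Defs
begin

lemma gdc: "w + (\<beta>::real) \<noteq> 0 \<Longrightarrow> ((\<lambda>v. \<alpha> / (v + \<beta>)\<^sup>2) has_real_derivative -2*\<alpha>/(w+\<beta>)^3) (at w)"
  apply (rule derivative_eq_intros refl | simp)+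
  apply (simp add: field_simps)
  apply algebra
  done
lemma gdc2: "w + (\<beta>::real) \<noteq> 0 \<Longrightarrow> ((\<lambda>v. -2*\<alpha> / (v + \<beta>)^3) has_real_derivative 6*\<alpha>/(w+\<beta>)^4) (at w)"
  apply (rule derivative_eq_intros refl | simp)+
  apply (simp add: field_simps)
  done


lemma sm_diff_at:
  assumes "smooth2 U u" "(t,x) \<in> U"
  shows "(\<lambda>z. pds ds u (fst z) (snd z)) differentiable at (t,x)"
  using assms unfolding smooth2_def
  by (meson differentiable_on_eq_differentiable_at)

lemma sm_dt:
  assumes "smooth2 U u" "(t,x) \<in> U"
  shows "((\<lambda>s. pds ds u s x) has_real_derivative pds (True#ds) u t x) (at t)"
proof -
  have d: "(\<lambda>z. pds ds u (fst z) (snd z)) differentiable at (t,x)" by (rule sm_diff_at[OF assms])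
  have "(\<lambda>s::real. (s,x)) differentiable at t" by (intro derivative_intros)
  then have "((\<lambda>z. pds ds u (fst z) (snd z)) \<circ> (\<lambda>s. (s,x))) differentiable at t"
    using d by (intro differentiable_chain_at) auto
  then have "(\<lambda>s. pds ds u s x) differentiable at t" by (simp add: o_def)
  then show ?thesis by (simp add: DERIV_deriv_iff_real_differentiable pdt_def)
qed

lemma sm_dx:
  assumes "smooth2 U u" "(t,x) \<in> U"
  shows "((\<lambda>y. pds ds u t y) has_real_derivative pds (False#ds) u t x) (at x)"
proof -
  have d: "(\<lambda>z. pds ds u (fst z) (snd z)) differentiable at (t,x)" by (rule sm_diff_at[OF assms])
  have "(\<lambda>y::real. (t,y)) differentiable at x" by (intro derivative_intros)
  then have "((\<lambda>z. pds ds u (fst z) (snd z)) \<circ> (\<lambda>y. (t,y))) differentiable at x"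
    using d by (intro differentiable_chain_at) auto
  then have "(\<lambda>y. pds ds u t y) differentiable at x" by (simp add: o_def)
  then show ?thesis by (simp add: DERIV_deriv_iff_real_differentiable pdx_def)
qed

lemma sm_cont:
  assumes "smooth2 U u"
  shows "continuous_on U (\<lambda>z. pds ds u (fst z) (snd z))"
  using assms unfolding smooth2_def by (simp add: differentiable_imp_continuous_on)



lemma clairaut:
  fixes F Fx Ft Fxt Ftx :: "real \<Rightarrow> real \<Rightarrow> real"
  assumes U: "open U" "(t0,x0) \<in> U"
  and dx: "\<And>t x. (t,x)\<in>U \<Longrightarrow> ((\<lambda>y. F t y) has_real_derivative Fx t x) (at x)"
  and dt: "\<And>t x. (t,x)\<in>U \<Longrightarrow> ((\<lambda>s. F s x) has_real_derivative Ft t x) (at t)"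
  and dxt: "\<And>t x. (t,x)\<in>U \<Longrightarrow> ((\<lambda>s. Fx s x) has_real_derivative Fxt t x) (at t)"
  and dtx: "\<And>t x. (t,x)\<in>U \<Longrightarrow> ((\<lambda>y. Ft t y) has_real_derivative Ftx t x) (at x)"
  and cx: "continuous_on U (\<lambda>z. Fx (fst z) (snd z))"
  and cxt: "continuous_on U (\<lambda>z. Fxt (fst z) (snd z))"
  shows "Ftx t0 x0 = Fxt t0 x0"
proof -
  obtain e where e: "e>0" "ball (t0,x0) e \<subseteq> U" using U open_contains_ball by blast
  define d where "d = e/2"
  have d: "d > 0" using e by (simp add: d_def)
  have box: "(s,y) \<in> U" if "s \<in> ball t0 d" "y \<in> cball x0 d" for s y
  proof -
    have "dist (t0,x0) (s,y) = sqrt ((dist t0 s)\<^sup>2 + (dist x0 y)\<^sup>2)" by (rule dist_Pair_Pair)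
    also have "\<dots> \<le> \<bar>dist t0 s\<bar> + \<bar>dist x0 y\<bar>" by (rule sqrt_sum_squares_le_sum_abs)
    also have "\<dots> < e" using that by (simp add: d_def)
    finally show ?thesis using e by auto
  qed
  define a where "a = x0 - d"
  have cxs: "continuous_on {a..y} (Fx s)" if "s \<in> ball t0 d" "y \<in> cball x0 d" for s y
  proof -
    have "continuous_on {a..y} (\<lambda>z. Fx (fst (s,z)) (snd (s,z)))"
      apply (rule continuous_on_compose2[OF cx])
       apply (intro continuous_intros)
      using that box by (auto simp: a_def dist_real_def)
    then show ?thesis by simp
  qed
  have cxts: "continuous_on {a..y} (Fxt s)" if "s \<in> ball t0 d" "y \<in> cball x0 d" for s y
  proof -
    have "continuous_on {a..y} (\<lambda>z. Fxt (fst (s,z)) (snd (s,z)))"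
      apply (rule continuous_on_compose2[OF cxt])
       apply (intro continuous_intros)
      using that box by (auto simp: a_def dist_real_def)
    then show ?thesis by simp
  qed
  have rep: "F s y = F s a + integral {a..y} (Fx s)" if "s \<in> ball t0 d" "y \<in> cball x0 d" for s y
  proof -
    have "a \<le> y" using that by (auto simp: a_def dist_real_def)
    have "(Fx s has_integral (F s y - F s a)) {a..y}"
    proof (rule fundamental_theorem_of_calculus[OF \<open>a \<le> y\<close>])
      fix z assume z: "z \<in> {a..y}"
      then have "z \<in> cball x0 d" using that by (auto simp: a_def dist_real_def)
      then have "((\<lambda>y. F s y) has_real_derivative Fx s z) (at z)" using dx box that by blast
      then show "(F s has_vector_derivative Fx s z) (at z within {a..y})"
        by (simp add: has_real_derivative_iff_has_vector_derivative has_vector_derivative_at_within)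
    qed
    then show ?thesis by (simp add: integral_unique)
  qed
  have Ftrep: "Ft s y = Ft s a + integral {a..y} (Fxt s)" if s: "s \<in> ball t0 d" and y: "y \<in> ball x0 d" for s y
  proof -
    have yc: "y \<in> cball x0 d" using y by auto
    have "((\<lambda>s. integral (cbox a y) (Fx s)) has_field_derivative integral (cbox a y) (Fxt s)) (at s within ball t0 d)"
    proof (rule leibniz_rule_field_derivative)
      fix s' z assume s': "s' \<in> ball t0 d" and z: "z \<in> cbox a y"
      then have "z \<in> cball x0 d" using yc by (auto simp: a_def dist_real_def)
      then show "((\<lambda>x. Fx x z) has_field_derivative Fxt s' z) (at s' within ball t0 d)"
        using dxt box s' by (blast intro: has_field_derivative_at_within)
    next
      fix s' assume "s' \<in> ball t0 d"
      then show "Fx s' integrable_on cbox a y" using cxs yc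
        by (simp add: integrable_continuous_interval)
    next
      have "continuous_on (ball t0 d \<times> cbox a y) (\<lambda>z. Fxt (fst z) (snd z))"
        apply (rule continuous_on_subset[OF cxt])
        using box yc by (auto simp: a_def dist_real_def)
      then show "continuous_on (ball t0 d \<times> cbox a y) (\<lambda>(x, t). Fxt x t)"
        by (simp add: case_prod_unfold)
    qed (use s in auto)
    then have L': "((\<lambda>s. integral {a..y} (Fx s)) has_real_derivative integral {a..y} (Fxt s)) (at s)"
      using s at_within_open[of s "ball t0 d"] by simp
    have "(s,a) \<in> U" using box[of s a] s d by (simp add: a_def dist_real_def)
    have D1: "((\<lambda>s. F s a + integral {a..y} (Fx s)) has_real_derivative Ft s a + integral {a..y} (Fxt s)) (at s)"
      by (rule DERIV_add[OF dt[OF \<open>(s,a) \<in> U\<close>] L'])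
    have D2: "((\<lambda>s. F s a + integral {a..y} (Fx s)) has_real_derivative Ft s y) (at s)"
      apply (rule has_field_derivative_transform_within_open[OF dt[of s y], where S="ball t0 d"])
      using box s yc rep by auto
    show ?thesis using DERIV_unique[OF D2 D1] .
  qed
  have x0i: "x0 \<in> interior {a..x0+d}" using d by (simp add: a_def)
  have D3: "((\<lambda>y. Ft t0 a + integral {a..y} (Fxt t0)) has_real_derivative Fxt t0 x0) (at x0)"
  proof -
    have "((\<lambda>y. integral {a..y} (Fxt t0)) has_real_derivative Fxt t0 x0) (at x0 within {a..x0+d})"
      apply (rule integral_has_real_derivative)
      using cxts[of t0 "x0+d"] d by (auto simp: a_def dist_real_def)
    then have "((\<lambda>y. integral {a..y} (Fxt t0)) has_real_derivative Fxt t0 x0) (at x0)"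
      using at_within_interior[OF x0i] by simp
    then show ?thesis by (auto intro!: derivative_eq_intros)
  qed
  have D4: "((\<lambda>y. Ft t0 a + integral {a..y} (Fxt t0)) has_real_derivative Ftx t0 x0) (at x0)"
    apply (rule has_field_derivative_transform_within_open[OF dtx[OF U(2)], where S="ball x0 d"])
    using d Ftrep[of t0] by auto
  show ?thesis using DERIV_unique[OF D4 D3] .
qed



definition E1 :: "real \<Rightarrow> real \<Rightarrow> real \<Rightarrow> real \<Rightarrow> real \<Rightarrow> real \<Rightarrow> real \<Rightarrow> real \<Rightarrow> real" where
 "E1 \<mu> \<nu> q qx qxx qt qtx qtxx = 2*qxx*qtxx + \<mu>*(2*qx*qtx) + (\<mu>-1)*(2*q*qt) + 2*\<nu>*qt"

definition E2 :: "real \<Rightarrow> real \<Rightarrow> real \<Rightarrow> real \<Rightarrow> real \<Rightarrow> real \<Rightarrow> real \<Rightarrow> real \<Rightarrow> real \<Rightarrow> real \<Rightarrow> real \<Rightarrow> real \<Rightarrow> real" where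
 "E2 \<mu> \<nu> q qx qxx qxxx qt qtx qtxx g0 g1 g2 =
   (let m = q - qxx; mx = qx - qxxx in
   2*(1-\<mu>)*qx*qtx + 2*((1-\<mu>)*q-\<nu>)*qtxx - 2*qxx*qt - 2*qx*qtx
 + (2*(\<mu>-2)*qx + mx)*m*g0 + (2*((\<mu>-2)*q+\<nu>)+m)*(mx*g0 + m*g1*qx)
 + ((2-\<mu>)*(2*q*qx - 2*qx*qxx) - \<nu>*qx)*g0 + ((2-\<mu>)*(q\<^sup>2-qx\<^sup>2) - \<nu>*q)*g1*qx
 + 1/2*(\<mu>-2)*qx*qx\<^sup>2*g1 + 1/2*((\<mu>-2)*q+\<nu>)*(2*qx*qxx)*g1 + 1/2*((\<mu>-2)*q+\<nu>)*qx\<^sup>2*g2*qx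
 + \<nu>*g0*qx)"

lemma alg_a:
  assumes eq: "qt - qtxx + f0 * (q - qxx) + (g1*qx*(q-qxx) + g0*(qx - qxxx)) = 0"
    and "\<nu> = 0" "\<mu> = 2" "f0 = -(1/2)*qx*g1"
  shows "E1 \<mu> \<nu> q qx qxx qt qtx qtxx + E2 \<mu> \<nu> q qx qxx qxxx qt qtx qtxx g0 g1 g2 = 0"
proof -
  have h: "qtxx = qt + f0 * (q - qxx) + (g1*qx*(q-qxx) + g0*(qx - qxxx))" using eq by linarith
  show ?thesis unfolding E1_def E2_def Let_def h assms(2-) by (simp add: field_simps power2_eq_square)
qed

lemma alg_b:
  assumes eq: "qt - qtxx + f0 * (q - qxx) + (g1*qx*(q-qxx) + g0*(qx - qxxx)) = 0"
    and "\<mu> = 2" "g0 = -2*\<alpha>*q+\<beta>" "g1 = -2*\<alpha>" "g2 = 0" "f0 = \<alpha>*qx"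
  shows "E1 \<mu> \<nu> q qx qxx qt qtx qtxx + E2 \<mu> \<nu> q qx qxx qxxx qt qtx qtxx g0 g1 g2 = 0"
proof -
  have h: "qtxx = qt + f0 * (q - qxx) + (g1*qx*(q-qxx) + g0*(qx - qxxx))" using eq by linarith
  show ?thesis unfolding E1_def E2_def Let_def h assms(2-) by (simp add: power2_eq_square algebra_simps)
qed

lemma alg_c:
  assumes eq: "qt - qtxx + f0 * (q - qxx) + (g1*qx*(q-qxx) + g0*(qx - qxxx)) = 0"
    and "\<nu> = (\<mu>-2)*\<beta>" "q + \<beta> \<noteq> 0" "g0 = \<alpha>/(q+\<beta>)\<^sup>2" "g1 = -2*\<alpha>/(q+\<beta>)^3" "g2 = 6*\<alpha>/(q+\<beta>)^4"
      "f0 = \<alpha>*qx/(q+\<beta>)^3"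
  shows "E1 \<mu> \<nu> q qx qxx qt qtx qtxx + E2 \<mu> \<nu> q qx qxx qxxx qt qtx qtxx g0 g1 g2 = 0"
proof -
  have h: "qtxx = qt + f0 * (q - qxx) + (g1*qx*(q-qxx) + g0*(qx - qxxx))" using eq by linarith
  show ?thesis unfolding E1_def E2_def Let_def h assms(2) assms(4-) using assms(3) apply (simp add: field_simps) apply (simp add: power2_eq_square algebra_simps) by algebra
qed


lemma sym1:
  assumes sm: "smooth2 U u" and tx: "(t,x) \<in> U"
  shows "pds (False#True#ds) u t x = pds (True#False#ds) u t x"
proof (rule clairaut[where F="pds ds u" and Fx="pds (False#ds) u" and Ft="pds (True#ds) u"
   and Fxt="pds (True#False#ds) u" and Ftx="pds (False#True#ds) u" and U=U])
  show "open U" using sm by (simp add: smooth2_def)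
qed (use sm tx sm_dx sm_dt sm_cont in blast)+

lemma nbhd:
  assumes "open U" "(t,x) \<in> (U::(real\<times>real) set)"
  obtains S where "open S" "x \<in> S" "\<And>y. y \<in> S \<Longrightarrow> (t,y) \<in> U"
proof -
  have "open ((\<lambda>y::real. (t,y)) -` U)"
    by (rule continuous_open_vimage[OF assms(1)]) (intro continuous_intros)
  then show ?thesis using that assms(2) by auto
qed

lemma sym2:
  assumes sm: "smooth2 U u" and tx: "(t,x) \<in> U"
  shows "pds [False,False,True] u t x = pds [True,False,False] u t x"
proof -
  have op: "open U" using sm by (simp add: smooth2_def)
  obtain S where S: "open S" "x \<in> S" "\<And>y. y \<in> S \<Longrightarrow> (t,y) \<in> U" using nbhd[OF op tx] by blast
  have d1: "((\<lambda>y. pds [True,False] u t y) has_real_derivative pds [False,True,False] u t x) (at x)"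
    using sm_dx[OF sm tx, of "[True,False]"] by simp
  have d2: "((\<lambda>y. pds [True,False] u t y) has_real_derivative pds [False,False,True] u t x) (at x)"
    apply (rule has_field_derivative_transform_within_open[OF sm_dx[OF sm tx, of "[False,True]"] S(1,2)])
    using sym1[OF sm S(3), of _ "[]"] by simp
  have "pds [False,False,True] u t x = pds [False,True,False] u t x" using DERIV_unique[OF d2 d1] .
  also have "\<dots> = pds [True,False,False] u t x" using sym1[OF sm tx, of "[False]"] by simp
  finally show ?thesis .
qed

lemma DT:
  assumes sm: "smooth2 U u" and tx: "(t,x) \<in> U"
  shows "((\<lambda>s. Tdens \<mu> \<nu> u s x) has_real_derivative
     E1 \<mu> \<nu> (u t x) (pdx u t x) (pdx (pdx u) t x) (pdt u t x) (pdx (pdt u) t x) (pdx (pdx (pdt u)) t x)) (at t)"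
proof -
  have a1: "((\<lambda>s. u s x) has_real_derivative pdt u t x) (at t)"
    using sm_dt[OF sm tx, of "[]"] by simp
  have a2: "((\<lambda>s. pdx u s x) has_real_derivative pdx (pdt u) t x) (at t)"
    using sm_dt[OF sm tx, of "[False]"] sym1[OF sm tx, of "[]"] by simp
  have a3: "((\<lambda>s. pdx (pdx u) s x) has_real_derivative pdx (pdx (pdt u)) t x) (at t)"
    using sm_dt[OF sm tx, of "[False,False]"] sym2[OF sm tx] by simp
  show ?thesis unfolding Tdens_def
    by (rule derivative_eq_intros a1 a2 a3 refl | simp add: E1_def)+
qed

lemma DP:
  assumes sm: "smooth2 U u" and tx: "(t,x) \<in> U"
    and hg: "(g has_real_derivative deriv g (u t x)) (at (u t x))"
    and hg1: "(deriv g has_real_derivative g2) (at (u t x))"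
    and hG: "(G has_real_derivative g (u t x)) (at (u t x))"
  shows "((\<lambda>y. Phi \<mu> \<nu> g G u t y) has_real_derivative
     E2 \<mu> \<nu> (u t x) (pdx u t x) (pdx (pdx u) t x) (pdx (pdx (pdx u)) t x) (pdt u t x) (pdx (pdt u) t x) (pdx (pdx (pdt u)) t x)
       (g (u t x)) (deriv g (u t x)) g2) (at x)"
proof -
  have b1: "((\<lambda>y. u t y) has_real_derivative pdx u t x) (at x)"
    using sm_dx[OF sm tx, of "[]"] by simp
  have b2: "((\<lambda>y. pdx u t y) has_real_derivative pdx (pdx u) t x) (at x)"
    using sm_dx[OF sm tx, of "[False]"] by simp
  have b3: "((\<lambda>y. pdx (pdx u) t y) has_real_derivative pdx (pdx (pdx u)) t x) (at x)"
    using sm_dx[OF sm tx, of "[False,False]"] by simp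
  have b4: "((\<lambda>y. pdt u t y) has_real_derivative pdx (pdt u) t x) (at x)"
    using sm_dx[OF sm tx, of "[True]"] by simp
  have b5: "((\<lambda>y. pdx (pdt u) t y) has_real_derivative pdx (pdx (pdt u)) t x) (at x)"
    using sm_dx[OF sm tx, of "[False,True]"] by simp
  have c1: "((\<lambda>y. g (u t y)) has_real_derivative deriv g (u t x) * pdx u t x) (at x)"
    by (rule DERIV_chain2[OF hg b1])
  have c2: "((\<lambda>y. deriv g (u t y)) has_real_derivative g2 * pdx u t x) (at x)"
    by (rule DERIV_chain2[OF hg1 b1])
  have c3: "((\<lambda>y. G (u t y)) has_real_derivative g (u t x) * pdx u t x) (at x)"
    by (rule DERIV_chain2[OF hG b1])
  show ?thesis unfolding Phi_def Let_def mfun_def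
    apply (rule derivative_eq_intros b1 b2 b3 b4 b5 c1 c2 c3 refl)+
    by (simp add: E2_def Let_def power2_eq_square field_simps)
qed

lemma EQ:
  assumes sm: "smooth2 U u" and tx: "(t,x) \<in> U"
    and hg: "(g has_real_derivative deriv g (u t x)) (at (u t x))"
    and sol: "solves_at f g u t x"
  shows "pdt u t x - pdx (pdx (pdt u)) t x + f (u t x) (pdx u t x) * (u t x - pdx (pdx u) t x)
     + (deriv g (u t x) * pdx u t x * (u t x - pdx (pdx u) t x) + g (u t x) * (pdx u t x - pdx (pdx (pdx u)) t x)) = 0"
proof -
  have a1: "((\<lambda>s. u s x) has_real_derivative pdt u t x) (at t)"
    using sm_dt[OF sm tx, of "[]"] by simp
  have a3: "((\<lambda>s. pdx (pdx u) s x) has_real_derivative pdx (pdx (pdt u)) t x) (at t)"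
    using sm_dt[OF sm tx, of "[False,False]"] sym2[OF sm tx] by simp
  have b1: "((\<lambda>y. u t y) has_real_derivative pdx u t x) (at x)"
    using sm_dx[OF sm tx, of "[]"] by simp
  have b3: "((\<lambda>y. pdx (pdx u) t y) has_real_derivative pdx (pdx (pdx u)) t x) (at x)"
    using sm_dx[OF sm tx, of "[False,False]"] by simp
  have c1: "((\<lambda>y. g (u t y)) has_real_derivative deriv g (u t x) * pdx u t x) (at x)"
    by (rule DERIV_chain2[OF hg b1])
  have m: "mfun u = (\<lambda>s y. u s y - pdx (pdx u) s y)" by (simp add: mfun_def fun_eq_iff)
  have e1: "pdt (mfun u) t x = pdt u t x - pdx (pdx (pdt u)) t x"
    unfolding pdt_def[of "mfun u"] by (rule DERIV_imp_deriv) (use DERIV_diff[OF a1 a3] in \<open>simp add: m\<close>)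
  have e2: "pdx (\<lambda>s y. g (u s y) * mfun u s y) t x =
     deriv g (u t x) * pdx u t x * (u t x - pdx (pdx u) t x) + g (u t x) * (pdx u t x - pdx (pdx (pdx u)) t x)"
    unfolding pdx_def[of "\<lambda>s y. g (u s y) * mfun u s y"]
    by (rule DERIV_imp_deriv) (use DERIV_mult[OF c1 DERIV_diff[OF b1 b3]] in \<open>simp add: m algebra_simps\<close>)
  show ?thesis using sol unfolding solves_at_def e1 e2 by (simp add: m)
qed



lemma cons_pt:
  fixes \<mu> \<nu> \<alpha> \<beta> :: real
    and h g G :: "real \<Rightarrow> real"
    and f :: "real \<Rightarrow> real \<Rightarrow> real"
    and u :: "real \<Rightarrow> real \<Rightarrow> real"
    and U :: "(real \<times> real) set"
  assumes fam:
    "(\<nu> = 0 \<and> \<mu> = 2 \<and> smooth1 h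
        \<and> f = (\<lambda>v vx. - (1/2) * vx * deriv h v) \<and> g = h
        \<and> (\<forall>v. (G has_real_derivative g v) (at v)))
   \<or> (\<nu> \<noteq> 0 \<and> \<mu> = 2
        \<and> f = (\<lambda>v vx. \<alpha> * vx) \<and> g = (\<lambda>v. - 2 * \<alpha> * v + \<beta>)
        \<and> (\<forall>v. (G has_real_derivative g v) (at v)))
   \<or> (\<mu> \<noteq> 2 \<and> \<nu> = (\<mu> - 2) * \<beta>
        \<and> f = (\<lambda>v vx. \<alpha> * vx / (v + \<beta>) ^ 3) \<and> g = (\<lambda>v. \<alpha> / (v + \<beta>)\<^sup>2)
        \<and> (\<forall>v. v + \<beta> \<noteq> 0 \<longrightarrow> (G has_real_derivative g v) (at v))
        \<and> (\<forall>z\<in>U. u (fst z) (snd z) + \<beta> \<noteq> 0))"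
    and sm: "smooth2 U u"
    and sol: "\<forall>z\<in>U. solves_at f g u (fst z) (snd z)"
    and tx: "(t,x) \<in> U"
  shows "pdt (Tdens \<mu> \<nu> u) t x + pdx (Phi \<mu> \<nu> g G u) t x = 0"
    and "((\<lambda>s. Tdens \<mu> \<nu> u s x) has_real_derivative pdt (Tdens \<mu> \<nu> u) t x) (at t)"
    and "((\<lambda>y. Phi \<mu> \<nu> g G u t y) has_real_derivative pdx (Phi \<mu> \<nu> g G u) t x) (at x)"
proof -
  let ?v = "u t x" and ?vx = "pdx u t x" and ?vxx = "pdx (pdx u) t x" and ?vxxx = "pdx (pdx (pdx u)) t x"
    and ?vt = "pdt u t x" and ?vtx = "pdx (pdt u) t x" and ?vtxx = "pdx (pdx (pdt u)) t x"
  have sl: "solves_at f g u t x" using sol tx by force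
  have key: "\<exists>g2. (g has_real_derivative deriv g ?v) (at ?v) \<and> (deriv g has_real_derivative g2) (at ?v)
     \<and> (G has_real_derivative g ?v) (at ?v)
     \<and> (?vt - ?vtxx + f ?v ?vx * (?v - ?vxx) + (deriv g ?v * ?vx * (?v - ?vxx) + g ?v * (?vx - ?vxxx)) = 0
         \<longrightarrow> E1 \<mu> \<nu> ?v ?vx ?vxx ?vt ?vtx ?vtxx + E2 \<mu> \<nu> ?v ?vx ?vxx ?vxxx ?vt ?vtx ?vtxx (g ?v) (deriv g ?v) g2 = 0)"
    using fam
  proof (elim disjE conjE)
    assume A: "\<nu> = 0" "\<mu> = 2" "smooth1 h" "f = (\<lambda>v vx. - (1/2) * vx * deriv h v)" "g = h"
      "\<forall>v. (G has_real_derivative g v) (at v)"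
    have h0: "h differentiable at w" for w
      using A(3) unfolding smooth1_def by (metis differentiable_on_def funpow_0 UNIV_I)
    have h1: "deriv h differentiable at w" for w
    proof -
      have "(deriv ^^ Suc 0) h differentiable_on UNIV" using A(3) unfolding smooth1_def by blast
      then show ?thesis by (simp add: differentiable_on_def)
    qed
    show ?thesis
    proof (intro exI[of _ "deriv (deriv h) ?v"] conjI impI)
      show "(g has_real_derivative deriv g ?v) (at ?v)" using h0 A(5) DERIV_deriv_iff_real_differentiable by blast
      show "(deriv g has_real_derivative deriv (deriv h) ?v) (at ?v)" using h1 A(5) DERIV_deriv_iff_real_differentiable by blast
      show "(G has_real_derivative g ?v) (at ?v)" using A(6) by blast
      assume "?vt - ?vtxx + f ?v ?vx * (?v - ?vxx) + (deriv g ?v * ?vx * (?v - ?vxx) + g ?v * (?vx - ?vxxx)) = 0"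
      then show "E1 \<mu> \<nu> ?v ?vx ?vxx ?vt ?vtx ?vtxx + E2 \<mu> \<nu> ?v ?vx ?vxx ?vxxx ?vt ?vtx ?vtxx (g ?v) (deriv g ?v) (deriv (deriv h) ?v) = 0"
        by (rule alg_a) (use A in simp_all)
    qed
  next
    assume A: "\<nu> \<noteq> 0" "\<mu> = 2" "f = (\<lambda>v vx. \<alpha> * vx)" "g = (\<lambda>v. - 2 * \<alpha> * v + \<beta>)"
      "\<forall>v. (G has_real_derivative g v) (at v)"
    have gd: "(g has_real_derivative -2*\<alpha>) (at w)" for w
      unfolding A(4) by (auto intro!: derivative_eq_intros)
    have dg: "deriv g = (\<lambda>w. -2*\<alpha>)" using gd DERIV_imp_deriv by blast
    show ?thesis
    proof (intro exI[of _ 0] conjI impI)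
      show "(g has_real_derivative deriv g ?v) (at ?v)" using gd dg by simp
      show "(deriv g has_real_derivative 0) (at ?v)" unfolding dg by simp
      show "(G has_real_derivative g ?v) (at ?v)" using A(5) by blast
      assume "?vt - ?vtxx + f ?v ?vx * (?v - ?vxx) + (deriv g ?v * ?vx * (?v - ?vxx) + g ?v * (?vx - ?vxxx)) = 0"
      then show "E1 \<mu> \<nu> ?v ?vx ?vxx ?vt ?vtx ?vtxx + E2 \<mu> \<nu> ?v ?vx ?vxx ?vxxx ?vt ?vtx ?vtxx (g ?v) (deriv g ?v) 0 = 0"
        by (rule alg_b[where \<alpha>=\<alpha> and \<beta>=\<beta>]) (use A dg in simp_all)
    qed
  next
    assume A: "\<mu> \<noteq> 2" "\<nu> = (\<mu> - 2) * \<beta>" "f = (\<lambda>v vx. \<alpha> * vx / (v + \<beta>) ^ 3)" "g = (\<lambda>v. \<alpha> / (v + \<beta>)\<^sup>2)"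
      "\<forall>v. v + \<beta> \<noteq> 0 \<longrightarrow> (G has_real_derivative g v) (at v)" "\<forall>z\<in>U. u (fst z) (snd z) + \<beta> \<noteq> 0"
    have nz: "?v + \<beta> \<noteq> 0" using A(6) tx by force
    have gd: "(g has_real_derivative -2*\<alpha>/(w+\<beta>)^3) (at w)" if "w + \<beta> \<noteq> 0" for w
      unfolding A(4) by (rule gdc[OF that])
    have dg: "deriv g w = -2*\<alpha>/(w+\<beta>)^3" if "w + \<beta> \<noteq> 0" for w
      using gd[OF that] DERIV_imp_deriv by blast
    have d2: "((\<lambda>w. -2*\<alpha>/(w+\<beta>)^3) has_real_derivative 6*\<alpha>/(?v+\<beta>)^4) (at ?v)"
      by (rule gdc2[OF nz])
    have o: "open (UNIV - {-\<beta>})" by (simp add: open_delete)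
    show ?thesis
    proof (intro exI[of _ "6*\<alpha>/(?v+\<beta>)^4"] conjI impI)
      show "(g has_real_derivative deriv g ?v) (at ?v)" using gd[OF nz] dg[OF nz] by simp
      show "(deriv g has_real_derivative 6*\<alpha>/(?v+\<beta>)^4) (at ?v)"
        apply (rule has_field_derivative_transform_within_open[OF d2 o])
        using nz dg by (auto simp: add_eq_0_iff)
      show "(G has_real_derivative g ?v) (at ?v)" using A(5) nz by blast
      assume "?vt - ?vtxx + f ?v ?vx * (?v - ?vxx) + (deriv g ?v * ?vx * (?v - ?vxx) + g ?v * (?vx - ?vxxx)) = 0"
      then show "E1 \<mu> \<nu> ?v ?vx ?vxx ?vt ?vtx ?vtxx + E2 \<mu> \<nu> ?v ?vx ?vxx ?vxxx ?vt ?vtx ?vtxx (g ?v) (deriv g ?v) (6*\<alpha>/(?v+\<beta>)^4) = 0"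
        by (rule alg_c[where \<alpha>=\<alpha> and \<beta>=\<beta>]) (use A dg[OF nz] nz in simp_all)
    qed
  qed
  then obtain g2 where hg: "(g has_real_derivative deriv g ?v) (at ?v)" and hg1: "(deriv g has_real_derivative g2) (at ?v)"
     and hG: "(G has_real_derivative g ?v) (at ?v)"
     and imp: "?vt - ?vtxx + f ?v ?vx * (?v - ?vxx) + (deriv g ?v * ?vx * (?v - ?vxx) + g ?v * (?vx - ?vxxx)) = 0
         \<Longrightarrow> E1 \<mu> \<nu> ?v ?vx ?vxx ?vt ?vtx ?vtxx + E2 \<mu> \<nu> ?v ?vx ?vxx ?vxxx ?vt ?vtx ?vtxx (g ?v) (deriv g ?v) g2 = 0"
    by blast
  have dT: "((\<lambda>s. Tdens \<mu> \<nu> u s x) has_real_derivative E1 \<mu> \<nu> ?v ?vx ?vxx ?vt ?vtx ?vtxx) (at t)"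
    by (rule DT[OF sm tx])
  have dP: "((\<lambda>y. Phi \<mu> \<nu> g G u t y) has_real_derivative E2 \<mu> \<nu> ?v ?vx ?vxx ?vxxx ?vt ?vtx ?vtxx (g ?v) (deriv g ?v) g2) (at x)"
    by (rule DP[OF sm tx hg hg1 hG])
  have eT: "pdt (Tdens \<mu> \<nu> u) t x = E1 \<mu> \<nu> ?v ?vx ?vxx ?vt ?vtx ?vtxx"
    unfolding pdt_def[of "Tdens \<mu> \<nu> u"] by (rule DERIV_imp_deriv[OF dT])
  have eP: "pdx (Phi \<mu> \<nu> g G u) t x = E2 \<mu> \<nu> ?v ?vx ?vxx ?vxxx ?vt ?vtx ?vtxx (g ?v) (deriv g ?v) g2"
    unfolding pdx_def[of "Phi \<mu> \<nu> g G u"] by (rule DERIV_imp_deriv[OF dP])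
  show "pdt (Tdens \<mu> \<nu> u) t x + pdx (Phi \<mu> \<nu> g G u) t x = 0"
    unfolding eT eP by (rule imp[OF EQ[OF sm tx hg sl]])
  show "((\<lambda>s. Tdens \<mu> \<nu> u s x) has_real_derivative pdt (Tdens \<mu> \<nu> u) t x) (at t)" using dT eT by simp
  show "((\<lambda>y. Phi \<mu> \<nu> g G u t y) has_real_derivative pdx (Phi \<mu> \<nu> g G u) t x) (at x)" using dP eP by simp
qed



theorem theorem3:
  fixes \<mu> \<nu> \<alpha> \<beta> :: real
    and h g G :: "real \<Rightarrow> real"
    and f :: "real \<Rightarrow> real \<Rightarrow> real"
    and u :: "real \<Rightarrow> real \<Rightarrow> real"
    and U :: "(real \<times> real) set"
  assumes fam:
    "(\<nu> = 0 \<and> \<mu> = 2 \<and> smooth1 h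
        \<and> f = (\<lambda>v vx. - (1/2) * vx * deriv h v) \<and> g = h
        \<and> (\<forall>v. (G has_real_derivative g v) (at v)))
   \<or> (\<nu> \<noteq> 0 \<and> \<mu> = 2
        \<and> f = (\<lambda>v vx. \<alpha> * vx) \<and> g = (\<lambda>v. - 2 * \<alpha> * v + \<beta>)
        \<and> (\<forall>v. (G has_real_derivative g v) (at v)))
   \<or> (\<mu> \<noteq> 2 \<and> \<nu> = (\<mu> - 2) * \<beta>
        \<and> f = (\<lambda>v vx. \<alpha> * vx / (v + \<beta>) ^ 3) \<and> g = (\<lambda>v. \<alpha> / (v + \<beta>)\<^sup>2)
        \<and> (\<forall>v. v + \<beta> \<noteq> 0 \<longrightarrow> (G has_real_derivative g v) (at v))
        \<and> (\<forall>z\<in>U. u (fst z) (snd z) + \<beta> \<noteq> 0))"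
    and smooth: "smooth2 U u"
    and sol: "\<forall>z\<in>U. solves_at f g u (fst z) (snd z)"
  shows "(\<forall>z\<in>U. pdt (Tdens \<mu> \<nu> u) (fst z) (snd z) + pdx (Phi \<mu> \<nu> g G u) (fst z) (snd z) = 0)
    \<and> (\<forall>a b I. a \<le> b \<longrightarrow> open I \<longrightarrow> I \<times> {a..b} \<subseteq> U
         \<longrightarrow> (\<forall>t\<in>I. Phi \<mu> \<nu> g G u t a = 0 \<and> Phi \<mu> \<nu> g G u t b = 0)
         \<longrightarrow> (\<forall>t\<in>I. ((\<lambda>s. integral {a..b} (\<lambda>x. Tdens \<mu> \<nu> u s x)) has_real_derivative 0) (at t)))"
proof (intro conjI allI impI ballI)
  fix z assume z: "z \<in> U"
  then have tx: "(fst z, snd z) \<in> U" by simp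
  show "pdt (Tdens \<mu> \<nu> u) (fst z) (snd z) + pdx (Phi \<mu> \<nu> g G u) (fst z) (snd z) = 0"
    by (rule cons_pt(1)[OF fam smooth sol tx])
next
  fix a b :: real and I :: "real set" and t
  assume ab: "a \<le> b" and oI: "open I" and sub: "I \<times> {a..b} \<subseteq> U"
    and ph: "\<forall>t\<in>I. Phi \<mu> \<nu> g G u t a = 0 \<and> Phi \<mu> \<nu> g G u t b = 0" and t: "t \<in> I"
  obtain e where e: "e > 0" "ball t e \<subseteq> I" using oI t open_contains_ball by blast
  have inU: "(s,y) \<in> U" if "s \<in> ball t e" "y \<in> {a..b}" for s y using that e sub by blast
  have opU: "open U" using smooth by (simp add: smooth2_def)
  have c0: "continuous_on U (\<lambda>z. u (fst z) (snd z))" using sm_cont[OF smooth, of "[]"] by simp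
  have c1: "continuous_on U (\<lambda>z. pdx u (fst z) (snd z))" using sm_cont[OF smooth, of "[False]"] by simp
  have c2: "continuous_on U (\<lambda>z. pdx (pdx u) (fst z) (snd z))" using sm_cont[OF smooth, of "[False,False]"] by simp
  have c3: "continuous_on U (\<lambda>z. pdt u (fst z) (snd z))" using sm_cont[OF smooth, of "[True]"] by simp
  have c4: "continuous_on U (\<lambda>z. pdx (pdt u) (fst z) (snd z))" using sm_cont[OF smooth, of "[False,True]"] by simp
  have c5: "continuous_on U (\<lambda>z. pdx (pdx (pdt u)) (fst z) (snd z))" using sm_cont[OF smooth, of "[False,False,True]"] by simp
  have cT: "continuous_on U (\<lambda>z. Tdens \<mu> \<nu> u (fst z) (snd z))"
    unfolding Tdens_def by (intro continuous_intros c0 c1 c2)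
  have cE: "continuous_on U (\<lambda>z. E1 \<mu> \<nu> (u (fst z) (snd z)) (pdx u (fst z) (snd z)) (pdx (pdx u) (fst z) (snd z))
        (pdt u (fst z) (snd z)) (pdx (pdt u) (fst z) (snd z)) (pdx (pdx (pdt u)) (fst z) (snd z)))"
    unfolding E1_def by (intro continuous_intros c0 c1 c2 c3 c4 c5)
  have eqE: "pdt (Tdens \<mu> \<nu> u) (fst z) (snd z) = E1 \<mu> \<nu> (u (fst z) (snd z)) (pdx u (fst z) (snd z)) (pdx (pdx u) (fst z) (snd z))
        (pdt u (fst z) (snd z)) (pdx (pdt u) (fst z) (snd z)) (pdx (pdx (pdt u)) (fst z) (snd z))" if "z \<in> U" for z
  proof -
    have tx: "(fst z, snd z) \<in> U" using that by simp
    show ?thesis unfolding pdt_def[of "Tdens \<mu> \<nu> u"] by (rule DERIV_imp_deriv[OF DT[OF smooth tx]])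
  qed
  have cTt: "continuous_on U (\<lambda>z. pdt (Tdens \<mu> \<nu> u) (fst z) (snd z))"
  proof -
    have "continuous_on U (\<lambda>z. pdt (Tdens \<mu> \<nu> u) (fst z) (snd z)) = continuous_on U (\<lambda>z. E1 \<mu> \<nu> (u (fst z) (snd z)) (pdx u (fst z) (snd z)) (pdx (pdx u) (fst z) (snd z))
        (pdt u (fst z) (snd z)) (pdx (pdt u) (fst z) (snd z)) (pdx (pdx (pdt u)) (fst z) (snd z)))"
      by (rule continuous_on_cong[OF refl]) (rule eqE)
    then show ?thesis using cE by simp
  qed
  have L: "((\<lambda>s. integral (cbox a b) (Tdens \<mu> \<nu> u s)) has_field_derivative integral (cbox a b) (pdt (Tdens \<mu> \<nu> u) t)) (at t within ball t e)"
  proof (rule leibniz_rule_field_derivative)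
    fix s y assume s: "s \<in> ball t e" and y: "y \<in> cbox a b"
    then have "(s,y) \<in> U" using inU by simp
    then show "((\<lambda>s. Tdens \<mu> \<nu> u s y) has_field_derivative pdt (Tdens \<mu> \<nu> u) s y) (at s within ball t e)"
      using cons_pt(2)[OF fam smooth sol] by (blast intro: has_field_derivative_at_within)
  next
    fix s assume s: "s \<in> ball t e"
    have "continuous_on {a..b} (\<lambda>y. Tdens \<mu> \<nu> u (fst (s,y)) (snd (s,y)))"
      apply (rule continuous_on_compose2[OF cT])
       apply (intro continuous_intros)
      using inU s by auto
    then show "Tdens \<mu> \<nu> u s integrable_on cbox a b" by (simp add: integrable_continuous_interval)
  next
    have "continuous_on (ball t e \<times> cbox a b) (\<lambda>z. pdt (Tdens \<mu> \<nu> u) (fst z) (snd z))"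
      apply (rule continuous_on_subset[OF cTt]) using inU by auto
    then show "continuous_on (ball t e \<times> cbox a b) (\<lambda>(x, y). pdt (Tdens \<mu> \<nu> u) x y)"
      by (simp add: case_prod_unfold)
  qed (use e in auto)
  then have L': "((\<lambda>s. integral {a..b} (Tdens \<mu> \<nu> u s)) has_real_derivative integral {a..b} (pdt (Tdens \<mu> \<nu> u) t)) (at t)"
    using at_within_open[of t "ball t e"] e by simp
  have "(pdx (Phi \<mu> \<nu> g G u) t has_integral (Phi \<mu> \<nu> g G u t b - Phi \<mu> \<nu> g G u t a)) {a..b}"
  proof (rule fundamental_theorem_of_calculus[OF ab])
    fix y assume y: "y \<in> {a..b}"
    then have "(t,y) \<in> U" using inU e by simp
    then have "((\<lambda>y. Phi \<mu> \<nu> g G u t y) has_real_derivative pdx (Phi \<mu> \<nu> g G u) t y) (at y)"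
      by (rule cons_pt(3)[OF fam smooth sol])
    then show "(Phi \<mu> \<nu> g G u t has_vector_derivative pdx (Phi \<mu> \<nu> g G u) t y) (at y within {a..b})"
      by (simp add: has_real_derivative_iff_has_vector_derivative has_vector_derivative_at_within)
  qed
  moreover have "Phi \<mu> \<nu> g G u t a = 0" "Phi \<mu> \<nu> g G u t b = 0" using ph t by blast+
  ultimately have "(pdx (Phi \<mu> \<nu> g G u) t has_integral 0) {a..b}" by (simp only: diff_self)
  then have "((\<lambda>y. - pdx (Phi \<mu> \<nu> g G u) t y) has_integral - 0) {a..b}" by (rule has_integral_neg)
  then have "((\<lambda>y. - pdx (Phi \<mu> \<nu> g G u) t y) has_integral 0) {a..b}" by (simp only: minus_zero)
  then have "(pdt (Tdens \<mu> \<nu> u) t has_integral 0) {a..b}"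
  proof (rule has_integral_eq[rotated])
    fix y assume y: "y \<in> {a..b}"
    then have "(t,y) \<in> U" using inU e by simp
    then show "- pdx (Phi \<mu> \<nu> g G u) t y = pdt (Tdens \<mu> \<nu> u) t y"
      using cons_pt(1)[OF fam smooth sol \<open>(t,y) \<in> U\<close>] by linarith
  qed
  then have "integral {a..b} (pdt (Tdens \<mu> \<nu> u) t) = 0" by (rule integral_unique)
  then show "((\<lambda>s. integral {a..b} (\<lambda>x. Tdens \<mu> \<nu> u s x)) has_real_derivative 0) (at t)"
    using L' by simp
qed


end
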